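(* Let $C>0$ and $Q\in\mathbb{N}$. There is a constant $C'>0$ depending only on $C$ and $Q$ such that for every image $I$ of width $w\geqslant2$ and every strip pattern set $\mathcal{L}$ of width $C$ and density $Q$ on $I$, $r(\mathcal{L})\leqslant C'w$.
   Context: Image: an image of width $w\geqslant2$ and height $h\geqslant1$ is a set of pixels identified with the integer points $(x,y)$, $x\in\{0,\dots,w-1\}$, $y\in\{0,\dots,h-1\}$. A pattern is a nonempty subset of the image; a pattern set is a nonempty set of distinct patterns. For a pattern set $\mathcal{T}$, $S(\mathcal{T})=|\mathcal{T}|\cdot|\bigcap_{T\in\mathcal{T}}T|$ and $r(\mathcal{T})=\max_{\varnothing\neq\mathcal{R}\subseteq\mathcal{T}}S(\mathcal{R})$. Strips: for a line $l$ and $C>0$, $s(l,C)=\{r\in\mathbb{R}^2\mid\rho(r,l)\leqslant C/2\}$, $\rho$ Euclidean distance. A line is mostly horizontal inclined to the right if it has equation $y=ax+b$ with $0\leqslant a\leqslant1$; it is integer at the image of width $w$ if $a=\frac{e}{w-1}$ for some $e\in\{0,\dots,w-1\}$. Patterns $T\in\mathcal{M}$ are $C$-parallel if there exist integer lines $l(T)$, $T\in\mathcal{M}$, all of the same slope, with $T\subset s(l(T),C)$ for all $T$. A pattern set $\mathcal{L}$ is a strip pattern set of width $C$ and density $Q$ if (1) every $L\in\mathcal{L}$ satisfies $L\subset s(l,C)$ for some integer line $l$, and (2) every $C$-parallel $\mathcal{M}\subseteq\mathcal{L}$ with $\bigcap_{L\in\mathcal{M}}L\neq\varnothing$ has $|\mathcal{M}|\leqslant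 Q$. *)

theory Defs
  imports "HOL-Analysis.Analysis"
begin

definition image :: "nat \<Rightarrow> nat \<Rightarrow> (int \<times> int) set" where
  "image w h = {(x, y). 0 \<le> x \<and> x < int w \<and> 0 \<le> y \<and> y < int h}"

definition pattern_set :: "nat \<Rightarrow> nat \<Rightarrow> (int \<times> int) set set \<Rightarrow> bool" where
  "pattern_set w h \<T> \<longleftrightarrow> \<T> \<noteq> {} \<and> (\<forall>T\<in>\<T>. T \<noteq> {} \<and> T \<subseteq> image w h)"

definition S_val :: "(int \<times> int) set set \<Rightarrow> nat" where
  "S_val \<T> = card \<T> * card (\<Inter>\<T>)"

definition r_val :: "(int \<times> int) set set \<Rightarrow> nat" where
  "r_val \<T> = Max {S_val \<R> | \<R>. \<R> \<noteq> {} \<and> \<R> \<subseteq> \<T>}"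

text \<open>The line y = a x + b in the plane, and the closed strip of width C around it
  (Euclidean distance; the product metric on real \<times> real is Euclidean).\<close>
definition line :: "real \<Rightarrow> real \<Rightarrow> (real \<times> real) set" where
  "line a b = {(x, a * x + b) | x. True}"

definition strip :: "real \<Rightarrow> real \<Rightarrow> real \<Rightarrow> (real \<times> real) set" where
  "strip a b C = {p. infdist p (line a b) \<le> C / 2}"

definition in_strip :: "(int \<times> int) set \<Rightarrow> real \<Rightarrow> real \<Rightarrow> real \<Rightarrow> bool" where
  "in_strip T a b C \<longleftrightarrow> (\<forall>(x, y)\<in>T. (real_of_int x, real_of_int y) \<in> strip a b C)"

text \<open>Slope of a mostly horizontal line inclined to the right which is integer at width w.\<close>
definition integer_slope :: "nat \<Rightarrow> real \<Rightarrow> bool" where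
  "integer_slope w a \<longleftrightarrow> (\<exists>e\<in>{0..w-1}. a = real e / (real w - 1))"

definition C_parallel :: "nat \<Rightarrow> real \<Rightarrow> (int \<times> int) set set \<Rightarrow> bool" where
  "C_parallel w C \<M> \<longleftrightarrow> (\<exists>a. integer_slope w a \<and> (\<forall>T\<in>\<M>. \<exists>b. in_strip T a b C))"

definition strip_pattern_set ::
  "nat \<Rightarrow> nat \<Rightarrow> real \<Rightarrow> nat \<Rightarrow> (int \<times> int) set set \<Rightarrow> bool" where
  "strip_pattern_set w h C Q \<L> \<longleftrightarrow>
     pattern_set w h \<L> \<and>
     (\<forall>L\<in>\<L>. \<exists>a b. integer_slope w a \<and> in_strip L a b C) \<and>
     (\<forall>\<M>. \<M> \<subseteq> \<L> \<and> C_parallel w C \<M> \<and> \<Inter>\<M> \<noteq> {} \<longrightarrow> card \<M> \<le> Q)"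

end

theory Submission
  imports Defs
begin

lemma strip_vert:
  assumes "0 \<le> a" "a \<le> 1" "(x, y) \<in> strip a b C"
  shows "\<bar>y - a * x - b\<bar> \<le> C"
proof -
  have ne: "line a b \<noteq> {}" unfolding line_def by auto
  have lb: "\<bar>y - a * x - b\<bar> / 2 \<le> dist (x, y) q" if qin: "q \<in> line a b" for q
  proof -
    obtain t where q: "q = (t, a * t + b)" using qin unfolding line_def by auto
    define u where "u = x - t"
    define v where "v = y - a * t - b"
    have e: "y - a * x - b = v - a * u" unfolding u_def v_def by (simp add: algebra_simps)
    have d: "dist (x, y) q = sqrt (u\<^sup>2 + v\<^sup>2)" unfolding q u_def v_def dist_Pair_Pair dist_real_def
      by (simp add: power2_abs algebra_simps)
    have hu: "\<bar>u\<bar> \<le> sqrt (u\<^sup>2 + v\<^sup>2)" using real_sqrt_sum_squares_ge1[of "\<bar>u\<bar>" v] by (simp add: power2_abs)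
    have hv: "\<bar>v\<bar> \<le> sqrt (u\<^sup>2 + v\<^sup>2)" using real_sqrt_sum_squares_ge2[of u "\<bar>v\<bar>"] by (simp add: power2_abs)
    have "\<bar>a * u\<bar> \<le> \<bar>u\<bar>" using assms(1,2) by (simp add: abs_mult mult_left_le_one_le)
    hence "\<bar>v - a * u\<bar> \<le> 2 * sqrt (u\<^sup>2 + v\<^sup>2)" using hu hv by linarith
    thus ?thesis using e d by simp
  qed
  have "\<bar>y - a * x - b\<bar> / 2 \<le> infdist (x, y) (line a b)"
    unfolding infdist_notempty[OF ne] by (rule cINF_greatest[OF ne lb])
  moreover have "infdist (x, y) (line a b) \<le> C / 2" using assms(3) unfolding strip_def by simp
  ultimately show ?thesis by simp
qed

lemma int_interval_card:
  fixes lo hi :: real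
  assumes "lo \<le> hi"
  shows "finite {y::int. lo \<le> real_of_int y \<and> real_of_int y \<le> hi} \<and> real (card {y::int. lo \<le> real_of_int y \<and> real_of_int y \<le> hi}) \<le> hi - lo + 1"
proof -
  have eq: "{y::int. lo \<le> real_of_int y \<and> real_of_int y \<le> hi} = {\<lceil>lo\<rceil>..\<lfloor>hi\<rfloor>}"
    by (auto simp: ceiling_le_iff le_floor_iff)
  have "real (card {\<lceil>lo\<rceil>..\<lfloor>hi\<rfloor>}) = real (nat (\<lfloor>hi\<rfloor> + 1 - \<lceil>lo\<rceil>))" by simp
  also have "\<dots> \<le> hi - lo + 1"
    using of_int_floor_le[of hi] le_of_int_ceiling[of lo]
    by (cases "\<lfloor>hi\<rfloor> + 1 - \<lceil>lo\<rceil> \<ge> 0") (use assms in \<open>auto simp: max_def, linarith+\<close>)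
  finally show ?thesis using eq by simp
qed

lemma fiber_card:
  fixes P :: "(int \<times> int) set" and X :: "int set" and f :: "int \<Rightarrow> real"
  assumes "finite X" "D \<ge> 0" "\<And>x y. (x, y) \<in> P \<Longrightarrow> x \<in> X \<and> \<bar>real_of_int y - f x\<bar> \<le> D"
  shows "finite P \<and> real (card P) \<le> real (card X) * (2 * D + 1)"
proof -
  define B where "B x = {y::int. f x - D \<le> real_of_int y \<and> real_of_int y \<le> f x + D}" for x
  have Bc: "finite (B x) \<and> real (card (B x)) \<le> 2 * D + 1" for x
    using int_interval_card[of "f x - D" "f x + D"] assms(2) unfolding B_def by auto
  have sub: "P \<subseteq> Sigma X B" using assms(3) unfolding B_def by (force simp: abs_le_iff)
  have fin: "finite (Sigma X B)" using assms(1) Bc by auto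
  have "real (card P) \<le> real (card (Sigma X B))" using card_mono[OF fin sub] by simp
  also have "\<dots> = (\<Sum>x\<in>X. real (card (B x)))" using assms(1) Bc by simp
  also have "\<dots> \<le> (\<Sum>x\<in>X. 2 * D + 1)" by (rule sum_mono) (use Bc in auto)
  also have "\<dots> = real (card X) * (2 * D + 1)" by simp
  finally show ?thesis using finite_subset[OF sub fin] by simp
qed

lemma image_finite: "finite (image w h)"
proof -
  have "image w h = {0..<int w} \<times> {0..<int h}" unfolding image_def by auto
  thus ?thesis by simp
qed

lemma main_bound:
  fixes C :: real
  assumes C: "C > 0" and w: "w \<ge> 2" and sp: "strip_pattern_set w h C Q \<L>"
    and Rne: "\<R> \<noteq> {}" and RL: "\<R> \<subseteq> \<L>"
  shows "real (S_val \<R>) \<le> real Q * (8 * C + 1) * (2 * C + 1) * real w"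
proof -
  define sl where "sl e = real e / (real w - 1)" for e :: nat
  have wpos: "real w - 1 > 0" using w by simp
  have sl01: "0 \<le> sl e \<and> sl e \<le> 1" if "e \<le> w - 1" for e
  proof -
    have "real e \<le> real w - 1" using that w by linarith
    thus ?thesis unfolding sl_def using wpos by simp
  qed
  have ps: "pattern_set w h \<L>" and sl_ex: "\<forall>L\<in>\<L>. \<exists>a b. integer_slope w a \<and> in_strip L a b C"
    and dens: "\<And>\<M>. \<M> \<subseteq> \<L> \<Longrightarrow> C_parallel w C \<M> \<Longrightarrow> \<Inter>\<M> \<noteq> {} \<Longrightarrow> card \<M> \<le> Q"
    using sp unfolding strip_pattern_set_def by auto
  have finL: "finite \<L>"
  proof -
    have "\<L> \<subseteq> Pow (image w h)" using ps unfolding pattern_set_def by auto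
    thus ?thesis using image_finite finite_Pow_iff finite_subset by metis
  qed
  have finR: "finite \<R>" using finite_subset[OF RL finL] .
  have "\<forall>T\<in>\<L>. \<exists>p. fst p \<in> {0..w-1} \<and> in_strip T (sl (fst p)) (snd p) C"
  proof
    fix T assume "T \<in> \<L>"
    then obtain a b e where "e \<in> {0..w-1}" "a = real e / (real w - 1)" "in_strip T a b C"
      using sl_ex unfolding integer_slope_def by blast
    thus "\<exists>p. fst p \<in> {0..w-1} \<and> in_strip T (sl (fst p)) (snd p) C"
      by (intro exI[of _ "(e, b)"]) (simp add: sl_def)
  qed
  then obtain f where f: "\<forall>T\<in>\<L>. fst (f T) \<in> {0..w-1} \<and> in_strip T (sl (fst (f T))) (snd (f T)) C"
    by (metis bchoice)
  define eT where "eT T = fst (f T)" for T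
  define bT where "bT T = snd (f T)" for T
  have eTr: "eT T \<in> {0..w-1}" if "T \<in> \<L>" for T using f that unfolding eT_def by auto
  have vert: "0 \<le> x \<and> x < int w \<and> \<bar>real_of_int y - sl (eT T) * real_of_int x - bT T\<bar> \<le> C"
    if "T \<in> \<L>" "(x, y) \<in> T" for T x y
  proof -
    have "T \<subseteq> image w h" using ps that(1) unfolding pattern_set_def by auto
    hence "0 \<le> x \<and> x < int w" using that(2) unfolding image_def by auto
    moreover have "(real_of_int x, real_of_int y) \<in> strip (sl (eT T)) (bT T) C"
      using f that unfolding in_strip_def eT_def bT_def by auto
    ultimately show ?thesis using strip_vert sl01 eTr[OF that(1)] by auto
  qed
  show ?thesis
  proof (cases "\<Inter>\<R> = {}")
    case True
    thus ?thesis using C by (simp add: S_val_def)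
  next
    case False
    define I where "I = \<Inter>\<R>"
    define K where "K = eT ` \<R>"
    define k where "k = card K"
    have finK: "finite K" using finR unfolding K_def by simp
    have Kne: "K \<noteq> {}" using Rne unfolding K_def by simp
    have k1: "k \<ge> 1" using finK Kne unfolding k_def by (simp add: Suc_le_eq card_gt_0_iff)
    have Ksub: "K \<subseteq> {0..w-1}" using eTr RL unfolding K_def by auto
    have kw: "k \<le> w" using card_mono[OF _ Ksub] w unfolding k_def by simp
    have cardR: "card \<R> \<le> Q * k"
    proof -
      have eq: "\<R> = (\<Union>e\<in>K. {T\<in>\<R>. eT T = e})" unfolding K_def by auto
      have fib: "card {T\<in>\<R>. eT T = e} \<le> Q" if "e \<in> K" for e
      proof (rule dens)
        show "{T\<in>\<R>. eT T = e} \<subseteq> \<L>" using RL by auto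
        show "C_parallel w C {T\<in>\<R>. eT T = e}"
        proof -
          have "integer_slope w (sl e)" using that Ksub unfolding integer_slope_def sl_def by auto
          moreover have "\<forall>T\<in>{T\<in>\<R>. eT T = e}. \<exists>b. in_strip T (sl e) b C"
          proof
            fix T assume "T \<in> {T\<in>\<R>. eT T = e}"
            hence "T \<in> \<L>" "eT T = e" using RL by auto
            thus "\<exists>b. in_strip T (sl e) b C" using f unfolding eT_def bT_def by metis
          qed
          ultimately show ?thesis unfolding C_parallel_def by blast
        qed
        show "\<Inter>{T\<in>\<R>. eT T = e} \<noteq> {}" using False by blast
      qed
      have "card \<R> \<le> (\<Sum>e\<in>K. card {T\<in>\<R>. eT T = e})" using card_UN_le[OF finK] eq by metis
      also have "\<dots> \<le> (\<Sum>e\<in>K. Q)" by (rule sum_mono) (use fib in auto)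
      finally show ?thesis unfolding k_def by (simp add: mult.commute)
    qed
    hence cardRr: "real (card \<R>) \<le> real Q * real k" by (metis of_nat_le_iff of_nat_mult)
    obtain T0 where T0: "T0 \<in> \<R>" using Rne by auto
    have I1: "real (card I) \<le> real w * (2 * C + 1)"
    proof -
      have "finite I \<and> real (card I) \<le> real (card {0..<int w}) * (2 * C + 1)"
      proof (rule fiber_card[where f = "\<lambda>x. sl (eT T0) * real_of_int x + bT T0"])
        fix x y assume "(x, y) \<in> I"
        hence "(x, y) \<in> T0" using T0 unfolding I_def by auto
        thus "x \<in> {0..<int w} \<and> \<bar>real_of_int y - (sl (eT T0) * real_of_int x + bT T0)\<bar> \<le> C"
          using vert[of T0 x y] T0 RL by (auto simp: algebra_simps)
      qed (use C in auto)
      thus ?thesis by simp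
    qed
    have Ibound: "real (card I) * real k \<le> (8 * C + 1) * (2 * C + 1) * real w"
    proof (cases "k \<ge> 2")
      case False
      hence "k = 1" using k1 by simp
      have "real w * (2 * C + 1) \<le> (8 * C + 1) * (2 * C + 1) * real w"
        using C by (simp add: algebra_simps mult_nonneg_nonneg)
      thus ?thesis using I1 \<open>k = 1\<close> by simp
    next
      case True
      define e1 where "e1 = Min K"
      define e2 where "e2 = Max K"
      have "K \<subseteq> {e1..e2}" using finK unfolding e1_def e2_def by auto
      hence "k \<le> e2 + 1 - e1" using card_mono[of "{e1..e2}" K] unfolding k_def by simp
      hence de: "real e2 - real e1 \<ge> real k - 1" using True by linarith
      obtain T1 where T1: "T1 \<in> \<R>" "eT T1 = e1" using Min_in[OF finK Kne] unfolding e1_def K_def by auto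
      obtain T2 where T2: "T2 \<in> \<R>" "eT T2 = e2" using Max_in[OF finK Kne] unfolding e2_def K_def by auto
      define d where "d = sl e2 - sl e1"
      have dd: "d = (real e2 - real e1) / (real w - 1)" unfolding d_def sl_def by (simp add: diff_divide_distrib)
      have kr: "real k - 1 > 0" using True by simp
      have dpos: "d > 0" unfolding dd using de kr wpos by simp
      define c where "c = bT T2 - bT T1"
      define lo where "lo = (- 2 * C - c) / d"
      define hi where "hi = (2 * C - c) / d"
      have lohi: "lo \<le> hi" unfolding lo_def hi_def using dpos C by (simp add: divide_right_mono)
      have X: "finite {x::int. lo \<le> real_of_int x \<and> real_of_int x \<le> hi} \<and>
          real (card {x::int. lo \<le> real_of_int x \<and> real_of_int x \<le> hi}) \<le> hi - lo + 1"
        by (rule int_interval_card[OF lohi])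
      have hl: "hi - lo = 4 * C / d" unfolding hi_def lo_def by (simp add: diff_divide_distrib[symmetric])
      have "finite I \<and> real (card I) \<le> real (card {x::int. lo \<le> real_of_int x \<and> real_of_int x \<le> hi}) * (2 * C + 1)"
      proof (rule fiber_card[where f = "\<lambda>x. sl e1 * real_of_int x + bT T1"])
        fix x y assume "(x, y) \<in> I"
        hence xy: "(x, y) \<in> T1" "(x, y) \<in> T2" using T1 T2 unfolding I_def by auto
        have v1: "\<bar>real_of_int y - sl e1 * real_of_int x - bT T1\<bar> \<le> C" using vert[OF _ xy(1)] T1 RL by auto
        have v2: "\<bar>real_of_int y - sl e2 * real_of_int x - bT T2\<bar> \<le> C" using vert[OF _ xy(2)] T2 RL by auto
        have "\<bar>d * real_of_int x + c\<bar> \<le> 2 * C" using v1 v2 unfolding d_def c_def by (simp add: algebra_simps abs_le_iff) 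
        hence "- 2 * C - c \<le> d * real_of_int x" "d * real_of_int x \<le> 2 * C - c" by (simp_all add: abs_le_iff)
        hence "lo \<le> real_of_int x" "real_of_int x \<le> hi" unfolding lo_def hi_def using dpos
          by (simp_all add: pos_divide_le_eq pos_le_divide_eq mult.commute)
        thus "x \<in> {x::int. lo \<le> real_of_int x \<and> real_of_int x \<le> hi} \<and> \<bar>real_of_int y - (sl e1 * real_of_int x + bT T1)\<bar> \<le> C"
          using v1 by (simp add: algebra_simps)
      qed (use C X in simp_all)
      have I2: "real (card I) \<le> (4 * C / d + 1) * (2 * C + 1)"
      proof -
        have "real (card {x::int. lo \<le> real_of_int x \<and> real_of_int x \<le> hi}) \<le> 4 * C / d + 1"
          using X hl by linarith
        hence "real (card {x::int. lo \<le> real_of_int x \<and> real_of_int x \<le> hi}) * (2 * C + 1) \<le> (4 * C / d + 1) * (2 * C + 1)"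
          using C by (intro mult_right_mono) auto
        thus ?thesis using \<open>finite I \<and> _\<close> by linarith
      qed
      have "4 * C / d = 4 * C * (real w - 1) / (real e2 - real e1)" unfolding dd by simp
      also have "\<dots> \<le> 4 * C * (real w - 1) / (real k - 1)"
        using de kr wpos C by (intro divide_left_mono) auto
      finally have q: "4 * C / d \<le> 4 * C * (real w - 1) / (real k - 1)" .
      have "(4 * C / d + 1) * real k \<le> (4 * C * (real w - 1) / (real k - 1) + 1) * real k"
        using q by (intro mult_right_mono) auto
      also have "\<dots> = 4 * C * (real w - 1) * (real k / (real k - 1)) + real k"
        using kr by (simp add: field_simps)
      also have "\<dots> \<le> 4 * C * (real w - 1) * 2 + real w"
      proof -
        have "real k / (real k - 1) \<le> 2" using kr True by (simp add: divide_le_eq)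
        moreover have "4 * C * (real w - 1) \<ge> 0" using C wpos by simp
        ultimately have "4 * C * (real w - 1) * (real k / (real k - 1)) \<le> 4 * C * (real w - 1) * 2"
          by (rule mult_left_mono)
        moreover have "real k \<le> real w" using kw by simp
        ultimately show ?thesis by (rule add_mono)
      qed
      also have "\<dots> \<le> (8 * C + 1) * real w" using C by (simp add: algebra_simps)
      finally have q2: "(4 * C / d + 1) * real k \<le> (8 * C + 1) * real w" .
      have "real (card I) * real k \<le> (4 * C / d + 1) * (2 * C + 1) * real k"
        using I2 by (intro mult_right_mono) auto
      also have "\<dots> = ((4 * C / d + 1) * real k) * (2 * C + 1)" by simp
      also have "\<dots> \<le> ((8 * C + 1) * real w) * (2 * C + 1)" using q2 C by (intro mult_right_mono) auto
      finally show ?thesis by (simp add: algebra_simps)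
    qed
    have "real (S_val \<R>) = real (card \<R>) * real (card I)" unfolding S_val_def I_def by simp
    also have "\<dots> \<le> real Q * real k * real (card I)" using cardRr by (intro mult_right_mono) auto
    also have "\<dots> = real Q * (real (card I) * real k)" by simp
    also have "\<dots> \<le> real Q * ((8 * C + 1) * (2 * C + 1) * real w)" using Ibound by (intro mult_left_mono) auto
    finally show ?thesis by (simp add: algebra_simps)
  qed
qed

theorem lemma3:
  fixes C :: real and Q :: nat
  assumes "C > 0"
  shows "\<exists>C'>0. \<forall>w h \<L>. w \<ge> 2 \<longrightarrow> h \<ge> 1 \<longrightarrow> strip_pattern_set w h C Q \<L> \<longrightarrow>
            real (r_val \<L>) \<le> C' * real w"
proof (intro exI[of _ "real (Q + 1) * (8 * C + 1) * (2 * C + 1)"] conjI allI impI)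
  show "0 < real (Q + 1) * (8 * C + 1) * (2 * C + 1)" using assms by simp
  fix w h \<L> assume w: "w \<ge> 2" and h: "h \<ge> 1" and sp: "strip_pattern_set w h C Q \<L>"
  have ps: "pattern_set w h \<L>" using sp unfolding strip_pattern_set_def by auto
  have finL: "finite \<L>"
  proof -
    have "\<L> \<subseteq> Pow (image w h)" using ps unfolding pattern_set_def by auto
    thus ?thesis using image_finite finite_Pow_iff finite_subset by metis
  qed
  have Lne: "\<L> \<noteq> {}" using ps unfolding pattern_set_def by auto
  define A where "A = {S_val \<R> | \<R>. \<R> \<noteq> {} \<and> \<R> \<subseteq> \<L>}"
  have "A \<subseteq> S_val ` Pow \<L>" unfolding A_def by auto
  hence finA: "finite A" using finL finite_subset by blast
  have neA: "A \<noteq> {}" using Lne unfolding A_def by auto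
  obtain R where R: "R \<noteq> {}" "R \<subseteq> \<L>" "r_val \<L> = S_val R"
    using Max_in[OF finA neA] unfolding r_val_def A_def[symmetric] by (auto simp: A_def)
  have "real (r_val \<L>) \<le> real Q * (8 * C + 1) * (2 * C + 1) * real w"
    using main_bound[OF assms w sp R(1,2)] R(3) by simp
  also have "\<dots> \<le> real (Q + 1) * (8 * C + 1) * (2 * C + 1) * real w"
    using assms by (intro mult_right_mono) auto
  finally show "real (r_val \<L>) \<le> real (Q + 1) * (8 * C + 1) * (2 * C + 1) * real w" .
qed

end
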